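(* Let $\mathcal{X},\mathcal{Y}$ be Hilbert spaces, $F:\mathcal{D}(F)\subset\mathcal{X}\to\mathcal{Y}$ an operator, $y\in\mathcal{Y}$ and $y^\delta\in\mathcal{Y}$ with $\|y-y^\delta\|\le\delta$. Assume: (a) $\Theta:\mathcal{X}\to(-\infty,\infty]$ is proper, weakly lower semi-continuous and $p$-convex for some $p>1$, i.e. there is $c_0>0$ with $D_\xi\Theta(\bar x,x)\ge c_0\|x-\bar x\|^p$ for all $\bar x\in\mathcal{D}(\Theta)$, $x\in\mathcal{D}(\partial\Theta)$, $\xi\in\partial\Theta(x)$; (b) there are $\rho>0$, $x_0\in\mathcal{X}$, $\xi_0\in\partial\Theta(x_0)$ with $B_{2\rho}(x_0)\subset\mathcal{D}(F)$, and $F(x)=y$ has a solution $x^*\in\mathcal{D}(\Theta)$ with $D_{\xi_0}\Theta(x^*,x_0)\le c_0\rho^p$; (c) $F$ is continuous and weakly closed on $\mathcal{D}(F)$; (d) there is a family of bounded linear operators $\{L(x):\mathcal{X}\to\mathcal{Y}\}_{x\in B_{2\rho}(x_0)\cap\mathcal{D}(\Theta)}$, with $x\mapsto L(x)$ continuous on $B_{2\rho}(x_0)\cap\mathcal{D}(\Theta)$, a number $0\le\eta<1$ with $\|F(x)-F(\bar x)-L(\bar x)(x-\bar x)\|<\eta\|F(x)-F(\bar x)\|$ for all $x,\bar x\in B_{2\rho}(x_0)\cap\mathcal{D}(\Theta)$, and $C_0>0$ with $\|L(x)\|\le C_0$ for all $x\in B_{2\rho}(x_0)$. Let $(\xi^\delta(t),x^\delta(t))$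 be the solution of $$\frac{d\xi^\delta(t)}{dt}=-L(x^\delta(t))^*(F(x^\delta(t))-y^\delta),\quad x^\delta(t)=\nabla\Theta^*(\xi^\delta(t)),\qquad \xi^\delta(0)=\xi_0,\ x^\delta(0)=x_0,$$ for $T>0$. Let $\hat x$ be any solution of $F(x)=y$ with $D_{\xi_0}\Theta(\hat x,x_0)\le c_0\rho^p$ and define $\varphi(T)=D_{\xi^\delta(T)}\Theta(\hat x,x^\delta(T))$. If $x^\delta(T)\in B_{2\rho}(x_0)$, then $\varphi$ is differentiable at $T$ and $$\varphi'(T)\le-(1-\eta)\|F(x^\delta(T))-y^\delta\|^2+\delta(1+\eta)\|F(x^\delta(T))-y^\delta\|.$$ In the case $\delta=0$ (so $y^\delta=y$, with solution denoted $(\xi(t),x(t))$), $$\int_0^\infty\|F(x(\tau))-y\|^2\,d\tau<\frac{1}{1-\eta}D_{\xi_0}\Theta(\hat x,x_0)\quad\text{and}\quad \lim_{T\to\infty}\|F(x(T))-y\|=0.$$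
   Context: $\partial\Theta$ is the subdifferential, $\mathcal{D}(\Theta)=\{x:\Theta(x)<\infty\}$, $\mathcal{D}(\partial\Theta)=\{x\in\mathcal{D}(\Theta):\partial\Theta(x)\ne\emptyset\}$, and $D_\xi\Theta(\bar x,x)=\Theta(\bar x)-\Theta(x)-\langle\xi,\bar x-x\rangle$ for $\xi\in\partial\Theta(x)$ is the Bregman distance. $\Theta^*$ is the Legendre–Fenchel conjugate of $\Theta$, $L(x)^*$ the adjoint, and $B_{2\rho}(x_0)$ the closed ball of radius $2\rho$ about $x_0$. *)

theory Defs
  imports "HOL-Analysis.Analysis"
begin

definition effdom :: "('a \<Rightarrow> ereal) \<Rightarrow> 'a set" where
  "effdom \<Theta> = {x. \<Theta> x < \<infinity>}"

definition subdiff :: "('a::real_inner \<Rightarrow> ereal) \<Rightarrow> 'a \<Rightarrow> 'a set" where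
  "subdiff \<Theta> x = {\<xi>. \<Theta> x < \<infinity> \<and> (\<forall>z. \<Theta> x + ereal (inner \<xi> (z - x)) \<le> \<Theta> z)}"

text \<open>Bregman distance D_xi Theta(xb, x) = Theta(xb) - Theta(x) - <xi, xb - x>
  (extended-real valued: equals +infinity when Theta(xb) = +infinity).\<close>
definition bregman :: "('a::real_inner \<Rightarrow> ereal) \<Rightarrow> 'a \<Rightarrow> 'a \<Rightarrow> 'a \<Rightarrow> ereal" where
  "bregman \<Theta> \<xi> xb x = \<Theta> xb - \<Theta> x - ereal (inner \<xi> (xb - x))"

definition conjugate :: "('a::real_inner \<Rightarrow> ereal) \<Rightarrow> 'a \<Rightarrow> ereal" where
  "conjugate \<Theta> \<xi> = (SUP x. ereal (inner \<xi> x) - \<Theta> x)"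

definition is_gradient :: "('a::real_inner \<Rightarrow> ereal) \<Rightarrow> 'a \<Rightarrow> 'a \<Rightarrow> bool" where
  "is_gradient g \<xi> x \<longleftrightarrow>
     (\<forall>\<^sub>F \<zeta> in nhds \<xi>. \<bar>g \<zeta>\<bar> \<noteq> \<infinity>) \<and>
     ((\<lambda>\<zeta>. real_of_ereal (g \<zeta>)) has_derivative (\<lambda>v. inner x v)) (at \<xi>)"

definition weakly_conv :: "(nat \<Rightarrow> 'a::real_inner) \<Rightarrow> 'a \<Rightarrow> bool" where
  "weakly_conv s l \<longleftrightarrow> (\<forall>z. (\<lambda>n. inner (s n) z) \<longlonglongrightarrow> inner l z)"

definition proper_fun :: "('a \<Rightarrow> ereal) \<Rightarrow> bool" where
  "proper_fun \<Theta> \<longleftrightarrow> (\<forall>x. \<Theta> x \<noteq> -\<infinity>) \<and> (\<exists>x. \<Theta> x < \<infinity>)"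

definition weakly_lsc :: "('a::real_inner \<Rightarrow> ereal) \<Rightarrow> bool" where
  "weakly_lsc \<Theta> \<longleftrightarrow> (\<forall>s l. weakly_conv s l \<longrightarrow> \<Theta> l \<le> liminf (\<lambda>n. \<Theta> (s n)))"

definition p_convex :: "('a::real_inner \<Rightarrow> ereal) \<Rightarrow> real \<Rightarrow> real \<Rightarrow> bool" where
  "p_convex \<Theta> p c0 \<longleftrightarrow>
     (\<forall>xb x \<xi>. xb \<in> effdom \<Theta> \<longrightarrow> \<xi> \<in> subdiff \<Theta> x \<longrightarrow>
        ereal (c0 * norm (x - xb) powr p) \<le> bregman \<Theta> \<xi> xb x)"

definition weakly_closed_on :: "'a set \<Rightarrow> ('a::real_inner \<Rightarrow> 'b::real_inner) \<Rightarrow> bool" where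
  "weakly_closed_on DF F \<longleftrightarrow>
     (\<forall>s l v. (\<forall>n. s n \<in> DF) \<longrightarrow> weakly_conv s l \<longrightarrow> weakly_conv (\<lambda>n. F (s n)) v
        \<longrightarrow> l \<in> DF \<and> F l = v)"

definition flow_solution ::
  "('a::real_inner \<Rightarrow> ereal) \<Rightarrow> 'a set \<Rightarrow> ('a \<Rightarrow> 'b::real_inner) \<Rightarrow> ('a \<Rightarrow> ('a \<Rightarrow>\<^sub>L 'b))
    \<Rightarrow> 'b \<Rightarrow> 'a \<Rightarrow> 'a \<Rightarrow> (real \<Rightarrow> 'a) \<Rightarrow> (real \<Rightarrow> 'a) \<Rightarrow> bool" where
  "flow_solution \<Theta> DF F L yd \<xi>0 x0 \<xi> x \<longleftrightarrow>
     \<xi> 0 = \<xi>0 \<and> x 0 = x0 \<and>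
     (\<forall>t\<ge>0. x t \<in> DF) \<and>
     (\<forall>t\<ge>0. is_gradient (conjugate \<Theta>) (\<xi> t) (x t)) \<and>
     (\<forall>t\<ge>0. (\<xi> has_vector_derivative
                 (- adjoint (blinfun_apply (L (x t))) (F (x t) - yd))) (at t within {0..}))"

end

theory Submission
  imports Defs
begin

lemma riesz_aux:
  fixes f :: "'a::{real_inner,complete_space} \<Rightarrow> real"
  assumes bl: "bounded_linear f" and fa: "f a = 1"
  shows "\<exists>w. \<forall>v. f v = inner v w"
proof -
  interpret f: bounded_linear f by fact
  define Z where "Z = {z. f z = 1}"
  define d where "d = Inf ((\<lambda>z. (norm z)\<^sup>2) ` Z)"
  have Zne: "a \<in> Z" using fa by (simp add: Z_def)
  have bdd: "bdd_below ((\<lambda>z. (norm z)\<^sup>2) ` Z)" by (rule bdd_belowI[of _ 0]) auto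
  have dle: "d \<le> (norm z)\<^sup>2" if "z \<in> Z" for z
    unfolding d_def using that bdd by (simp add: cInf_lower)
  have "\<exists>z\<in>Z. (norm z)\<^sup>2 < d + 1 / (real n + 1)" for n
  proof -
    have "Inf ((\<lambda>z. (norm z)\<^sup>2) ` Z) < d + 1 / (real n + 1)" unfolding d_def by simp
    then show ?thesis using Zne by (subst (asm) cInf_less_iff[OF _ bdd]) auto
  qed
  then obtain z where zZ: "\<And>n. z n \<in> Z" and zd: "\<And>n. (norm (z n))\<^sup>2 < d + 1 / (real n + 1)"
    by metis
  have mid: "d \<le> (norm ((z n + z m) /\<^sub>R 2))\<^sup>2" for n m
    using zZ[of n] zZ[of m] by (intro dle) (auto simp: Z_def f.add f.scale)
  have par: "(norm (z n - z m))\<^sup>2 = 2 * (norm (z n))\<^sup>2 + 2 * (norm (z m))\<^sup>2 - 4 * (norm ((z n + z m) /\<^sub>R 2))\<^sup>2" for n m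
    by (simp add: power2_norm_eq_inner inner_diff_left inner_diff_right inner_add_left inner_add_right inner_commute algebra_simps)
  have cb: "(norm (z n - z m))\<^sup>2 \<le> 2 / (real n + 1) + 2 / (real m + 1)" for n m
    using par[of n m] mid[of n m] zd[of n] zd[of m] by linarith
  have "Cauchy z"
  proof (rule metric_CauchyI)
    fix e :: real assume e: "e > 0"
    obtain N :: nat where N: "4 / e\<^sup>2 < real N" using reals_Archimedean2 by blast
    have "dist (z n) (z m) < e" if "n \<ge> N" "m \<ge> N" for n m
    proof -
      have "2 / (real n + 1) \<le> 2 / (real N + 1)" "2 / (real m + 1) \<le> 2 / (real N + 1)"
        using that by (auto intro!: divide_left_mono)
      moreover have "4 / (real N + 1) < e\<^sup>2"
        using N e by (simp add: field_simps) (smt (verit) mult_pos_pos power2_eq_square)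
      ultimately have "(norm (z n - z m))\<^sup>2 < e\<^sup>2" using cb[of n m] by linarith
      then show ?thesis using e by (simp add: dist_norm power_less_imp_less_base)
    qed
    then show "\<exists>M. \<forall>m\<ge>M. \<forall>n\<ge>M. dist (z m) (z n) < e" by blast
  qed
  then obtain z0 where lim: "z \<longlonglongrightarrow> z0" using convergent_eq_Cauchy by blast
  have fz0: "f z0 = 1"
  proof -
    have "(\<lambda>n. f (z n)) \<longlonglongrightarrow> f z0" using lim f.tendsto by blast
    moreover have "(\<lambda>n. f (z n)) = (\<lambda>n. 1)" using zZ by (auto simp: Z_def)
    ultimately show ?thesis using LIMSEQ_const_iff by metis
  qed
  have nz0: "(norm z0)\<^sup>2 \<le> d"
  proof (rule tendsto_le[of sequentially])
    show "((\<lambda>n. (norm (z n))\<^sup>2) \<longlongrightarrow> (norm z0)\<^sup>2) sequentially"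
      by (intro tendsto_intros lim)
    show "((\<lambda>n. d + 1 / (real n + 1)) \<longlongrightarrow> d) sequentially"
      using tendsto_add[OF tendsto_const LIMSEQ_inverse_real_of_nat, of d] by (simp add: inverse_eq_divide add.commute)
    show "\<forall>\<^sub>F n in sequentially. (norm (z n))\<^sup>2 \<le> d + 1 / (real n + 1)" using zd by (simp add: less_imp_le)
  qed simp
  have orth: "inner z0 v = 0" if "f v = 0" for v
  proof -
    define A where "A = inner z0 v" define B where "B = (norm v)\<^sup>2"
    have "z0 + t *\<^sub>R v \<in> Z" for t using fz0 that by (simp add: Z_def f.add f.scale)
    then have "(norm z0)\<^sup>2 \<le> (norm (z0 + t *\<^sub>R v))\<^sup>2" for t using dle nz0 by (meson order.trans)
    also have "(norm (z0 + t *\<^sub>R v))\<^sup>2 = (norm z0)\<^sup>2 + 2 * t * A + t\<^sup>2 * B" for t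
      unfolding A_def B_def power2_norm_eq_inner
      by (simp add: inner_add_left inner_add_right inner_commute power2_eq_square algebra_simps)
    finally have ineq: "0 \<le> 2 * t * A + t\<^sup>2 * B" for t by simp
    have B0: "B \<ge> 0" by (simp add: B_def)
    define t where "t = - A / (B + 1)"
    have e: "(B+1)\<^sup>2 * (2 * t * A + t\<^sup>2 * B) = 2 * (- A) * A * (B + 1) + A\<^sup>2 * B"
    proof -
      have "B + 1 \<noteq> 0" using B0 by simp
      then have h1: "(B+1)\<^sup>2 * t = - A * (B + 1)"
        unfolding t_def by (simp_all add: power2_eq_square field_simps)
      have h2: "(B+1)\<^sup>2 * t\<^sup>2 = A\<^sup>2"
        using \<open>B + 1 \<noteq> 0\<close> unfolding t_def by (simp add: power_divide)
      have "(B+1)\<^sup>2 * (2 * t * A + t\<^sup>2 * B) = 2 * A * ((B+1)\<^sup>2 * t) + B * ((B+1)\<^sup>2 * t\<^sup>2)"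
        by (simp add: algebra_simps)
      also have "\<dots> = 2 * (- A) * A * (B + 1) + A\<^sup>2 * B" unfolding h1 h2 by (simp add: algebra_simps)
      finally show ?thesis .
    qed
    have "0 \<le> (B+1)\<^sup>2 * (2 * t * A + t\<^sup>2 * B)" using ineq[of t] by simp
    then have "0 \<le> 2 * (- A) * A * (B + 1) + A\<^sup>2 * B" using e by simp
    then have "A\<^sup>2 * (B + 2) \<le> 0" by (simp add: algebra_simps power2_eq_square)
    then have "A\<^sup>2 \<le> 0" using B0 by (simp add: mult_le_0_iff)
    then show ?thesis by (simp add: A_def)
  qed
  have z0ne: "z0 \<noteq> 0" using fz0 f.zero by auto
  show ?thesis
  proof (intro exI allI)
    fix v
    have "f (v - f v *\<^sub>R z0) = 0" using fz0 by (simp add: f.diff f.scale)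
    then have "inner z0 (v - f v *\<^sub>R z0) = 0" by (rule orth)
    then have "inner v z0 = f v * (norm z0)\<^sup>2"
      by (simp add: inner_diff_right inner_commute power2_norm_eq_inner)
    then show "f v = inner v ((1 / (norm z0)\<^sup>2) *\<^sub>R z0)" using z0ne by simp
  qed
qed

lemma riesz:
  fixes f :: "'a::{real_inner,complete_space} \<Rightarrow> real"
  assumes bl: "bounded_linear f"
  shows "\<exists>w. \<forall>v. f v = inner v w"
proof (cases "\<exists>a. f a \<noteq> 0")
  case True
  then obtain a where a: "f a \<noteq> 0" by blast
  interpret f: bounded_linear f by fact
  have "f ((1 / f a) *\<^sub>R a) = 1" using a by (simp add: f.scale)
  from riesz_aux[OF bl this] show ?thesis .
next
  case False then show ?thesis by (intro exI[of _ 0]) auto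
qed

lemma adjoint_blinfun:
  fixes A :: "'a::{real_inner,complete_space} \<Rightarrow>\<^sub>L 'b::real_inner"
  shows "inner (blinfun_apply A v) r = inner v (adjoint (blinfun_apply A) r)"
proof -
  have "\<forall>r. \<exists>w. \<forall>v. inner (blinfun_apply A v) r = inner v w"
  proof
    fix r
    have "bounded_linear (\<lambda>v. inner (blinfun_apply A v) r)"
      by (intro bounded_linear_inner_left_comp blinfun.bounded_linear_right)
    from riesz[OF this] show "\<exists>w. \<forall>v. inner (blinfun_apply A v) r = inner v w" .
  qed
  then have "\<exists>g. \<forall>v r. inner (blinfun_apply A v) r = inner v (g r)" by metis
  then have "\<forall>v r. inner (blinfun_apply A v) r = inner v (adjoint (blinfun_apply A) r)"
    unfolding adjoint_def by (rule someI_ex)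
  then show ?thesis by blast
qed

lemma adjoint_norm_le:
  fixes A :: "'a::{real_inner,complete_space} \<Rightarrow>\<^sub>L 'b::real_inner"
  shows "norm (adjoint (blinfun_apply A) r) \<le> norm A * norm r"
proof -
  define w where "w = adjoint (blinfun_apply A) r"
  have "(norm w)\<^sup>2 = inner (blinfun_apply A w) r"
    by (simp add: w_def adjoint_blinfun power2_norm_eq_inner)
  also have "\<dots> \<le> norm (blinfun_apply A w) * norm r" by (rule norm_cauchy_schwarz)
  also have "\<dots> \<le> norm A * norm w * norm r" by (simp add: norm_blinfun mult_right_mono)
  finally have "norm w * norm w \<le> (norm A * norm r) * norm w" by (simp add: power2_eq_square algebra_simps)
  then show ?thesis unfolding w_def[symmetric]
    by (cases "norm w = 0") (auto simp: mult_le_cancel_right)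
qed

lemma conj_FY: "ereal (inner \<zeta> z) - \<Theta> z \<le> conjugate \<Theta> \<zeta>"
  unfolding conjugate_def by (rule SUP_upper) simp

lemma lim_inv_n1: "(\<lambda>n. 1 / (real n + 1)) \<longlonglongrightarrow> 0"
  using LIMSEQ_inverse_real_of_nat by (simp add: inverse_eq_divide add.commute)

lemma grad_conj_seq:
  fixes \<Theta> :: "'a::real_inner \<Rightarrow> ereal"
  assumes g: "is_gradient (conjugate \<Theta>) \<xi> x"
    and cfin: "conjugate \<Theta> \<xi> = ereal c"
    and zn: "\<And>n. c - 1 / (real n + 1) < inner \<xi> (z n) - \<theta> n"
    and th: "\<And>n. \<Theta> (z n) = ereal (\<theta> n)"
  shows "z \<longlonglongrightarrow> x"
proof -
  let ?g = "\<lambda>\<zeta>. real_of_ereal (conjugate \<Theta> \<zeta>)"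
  from g have ev: "\<forall>\<^sub>F \<zeta> in nhds \<xi>. \<bar>conjugate \<Theta> \<zeta>\<bar> \<noteq> \<infinity>"
    and der: "(?g has_derivative (\<lambda>v. inner x v)) (at \<xi>)" by (auto simp: is_gradient_def)
  from ev obtain r where r: "r > 0" "\<And>\<zeta>. dist \<zeta> \<xi> < r \<Longrightarrow> \<bar>conjugate \<Theta> \<zeta>\<bar> \<noteq> \<infinity>"
    unfolding eventually_nhds_metric by blast
  have gc: "?g \<xi> = c" using cfin by simp
  have key: "\<exists>s>0. \<forall>n. norm (z n - x) \<le> e + 1 / (s * (real n + 1))" if e: "e > 0" for e
  proof -
    from der e obtain d where d: "d > 0"
      "\<And>y. norm (y - \<xi>) < d \<Longrightarrow> norm (?g y - ?g \<xi> - inner x (y - \<xi>)) \<le> e * norm (y - \<xi>)"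
      unfolding has_derivative_at_alt by blast
    define s where "s = min d r / 2"
    have s: "s > 0" "s < d" "s < r" using d r by (auto simp: s_def)
    have "norm (z n - x) \<le> e + 1 / (s * (real n + 1))" for n
    proof (cases "z n = x")
      case True then show ?thesis using e s by simp
    next
      case False
      define u where "u = z n - x"
      have un: "norm u > 0" using False by (simp add: u_def)
      define w where "w = (s / norm u) *\<^sub>R u"
      have nw: "norm w = s" using un s by (simp add: w_def)
      have wu: "inner w u = s * norm u" using un
        by (simp add: w_def power2_norm_eq_inner[symmetric] power2_eq_square)
      have fin: "\<bar>conjugate \<Theta> (\<xi> + w)\<bar> \<noteq> \<infinity>" using r(2)[of "\<xi> + w"] nw s by (simp add: dist_norm)
      then have ceq: "conjugate \<Theta> (\<xi> + w) = ereal (?g (\<xi> + w))" by (cases "conjugate \<Theta> (\<xi> + w)") auto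
      have "ereal (inner (\<xi> + w) (z n)) - \<Theta> (z n) \<le> conjugate \<Theta> (\<xi> + w)" by (rule conj_FY)
      then have "ereal (inner (\<xi> + w) (z n) - \<theta> n) \<le> conjugate \<Theta> (\<xi> + w)" using th[of n] by simp
      then have "ereal (inner (\<xi> + w) (z n) - \<theta> n) \<le> ereal (?g (\<xi> + w))" by (subst (asm) ceq)
      then have lo: "inner (\<xi> + w) (z n) - \<theta> n \<le> ?g (\<xi> + w)" by simp
      have "norm (?g (\<xi> + w) - ?g \<xi> - inner x w) \<le> e * norm w" using d(2)[of "\<xi> + w"] nw s by simp
      then have up: "?g (\<xi> + w) \<le> c + inner x w + e * s" using gc nw by simp
      have "inner w (z n) - inner x w < e * s + 1 / (real n + 1)"
        using lo up zn[of n] by (simp add: inner_add_left)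
      then have "s * norm u < e * s + 1 / (real n + 1)"
        using wu by (simp add: u_def inner_diff_right inner_commute)
      then have "norm u < (e * s + 1 / (real n + 1)) / s" using s by (subst pos_less_divide_eq) (auto simp: mult.commute)
      also have "\<dots> = e + 1 / (s * (real n + 1))" using s by (simp add: add_divide_distrib mult.commute)
      finally show ?thesis by (simp add: u_def)
    qed
    then show ?thesis using s by blast
  qed
  show ?thesis
  proof (rule LIMSEQ_I)
    fix eps :: real assume eps: "eps > 0"
    obtain s where s: "s > 0" "\<And>n. norm (z n - x) \<le> eps / 2 + 1 / (s * (real n + 1))"
      using key[of "eps/2"] eps by auto
    obtain N :: nat where N: "2 / (s * eps) < real N" using reals_Archimedean2 by blast
    have "norm (z n - x) < eps" if "n \<ge> N" for n
    proof -
      have "1 / (s * (real n + 1)) < eps / 2"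
      proof -
        have "2 / (s * eps) < real n + 1" using N that by linarith
        then have "2 < (real n + 1) * (s * eps)" using s eps by (simp add: field_simps)
        moreover have "0 < s * (real n + 1)" using s by simp
        ultimately show ?thesis by (subst pos_divide_less_eq) (auto simp: algebra_simps)
      qed
      then show ?thesis using s(2)[of n] by linarith
    qed
    then show "\<exists>N. \<forall>n\<ge>N. norm (z n - x) < eps" by blast
  qed
qed

lemma grad_conj_subdiff:
  fixes \<Theta> :: "'a::real_inner \<Rightarrow> ereal"
  assumes proper: "proper_fun \<Theta>" and wlsc: "weakly_lsc \<Theta>"
    and g: "is_gradient (conjugate \<Theta>) \<xi> x"
  shows "\<Theta> x = ereal (inner \<xi> x - real_of_ereal (conjugate \<Theta> \<xi>))"
    and "\<xi> \<in> subdiff \<Theta> x"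
    and "conjugate \<Theta> \<xi> = ereal (real_of_ereal (conjugate \<Theta> \<xi>))"
proof -
  define c where "c = real_of_ereal (conjugate \<Theta> \<xi>)"
  from g have "\<forall>\<^sub>F \<zeta> in nhds \<xi>. \<bar>conjugate \<Theta> \<zeta>\<bar> \<noteq> \<infinity>" by (simp add: is_gradient_def)
  then have "\<bar>conjugate \<Theta> \<xi>\<bar> \<noteq> \<infinity>" by (rule eventually_nhds_x_imp_x)
  then show cfin: "conjugate \<Theta> (\<xi>) = ereal (real_of_ereal (conjugate \<Theta> \<xi>))" by (cases "conjugate \<Theta> \<xi>") auto
  then have cfin': "conjugate \<Theta> \<xi> = ereal c" by (simp add: c_def)
  have notm: "\<Theta> z \<noteq> -\<infinity>" for z using proper by (simp add: proper_fun_def)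
  have "\<exists>z. ereal (c - 1 / (real n + 1)) < ereal (inner \<xi> z) - \<Theta> z" for n
  proof -
    have "ereal (c - 1 / (real n + 1)) < conjugate \<Theta> \<xi>" using cfin' by simp
    then show ?thesis unfolding conjugate_def by (subst (asm) less_SUP_iff) auto
  qed
  then obtain z where z: "\<And>n. ereal (c - 1 / (real n + 1)) < ereal (inner \<xi> (z n)) - \<Theta> (z n)" by metis
  define \<theta> where "\<theta> n = real_of_ereal (\<Theta> (z n))" for n
  have th: "\<Theta> (z n) = ereal (\<theta> n)" for n
  proof -
    have "\<Theta> (z n) \<noteq> \<infinity>" using z[of n] by auto
    then show ?thesis using notm[of "z n"] by (cases "\<Theta> (z n)") (auto simp: \<theta>_def)
  qed
  have zn: "c - 1 / (real n + 1) < inner \<xi> (z n) - \<theta> n" for n using z[of n] th[of n] by simp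
  have lim: "z \<longlonglongrightarrow> x" by (rule grad_conj_seq[OF g cfin' zn th])
  have wc: "weakly_conv z x" unfolding weakly_conv_def
    by (intro allI tendsto_intros lim)
  have "\<Theta> x \<le> liminf (\<lambda>n. \<Theta> (z n))" using wlsc wc by (simp add: weakly_lsc_def)
  also have "\<dots> \<le> liminf (\<lambda>n. ereal (inner \<xi> (z n) - c + 1 / (real n + 1)))"
    by (intro Liminf_mono always_eventually allI) (simp add: th; smt (verit) zn)
  also have "\<dots> = ereal (inner \<xi> x - c + 0)"
  proof (rule lim_imp_Liminf[OF trivial_limit_sequentially])
    show "(\<lambda>n. ereal (inner \<xi> (z n) - c + 1 / (real n + 1))) \<longlonglongrightarrow> ereal (inner \<xi> x - c + 0)"
      unfolding lim_ereal
      by (rule tendsto_add[OF tendsto_diff[OF tendsto_inner[OF tendsto_const lim] tendsto_const] lim_inv_n1])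
  qed
  finally have le: "\<Theta> x \<le> ereal (inner \<xi> x - c)" by simp
  have ge: "ereal (inner \<xi> x) - \<Theta> x \<le> ereal c" using conj_FY[of \<xi> x \<Theta>] cfin' by simp
  show eq: "\<Theta> x = ereal (inner \<xi> x - real_of_ereal (conjugate \<Theta> \<xi>))"
    unfolding c_def[symmetric] using le ge notm[of x] by (cases "\<Theta> x") auto
  show "\<xi> \<in> subdiff \<Theta> x"
    unfolding subdiff_def
  proof (intro CollectI conjI allI)
    show "\<Theta> x < \<infinity>" using eq by simp
    fix w
    have fy: "ereal (inner \<xi> w) - \<Theta> w \<le> ereal c" using conj_FY[of \<xi> w \<Theta>] cfin' by simp
    show "\<Theta> x + ereal (inner \<xi> (w - x)) \<le> \<Theta> w"
      using fy notm[of w] eq unfolding c_def[symmetric]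
      by (cases "\<Theta> w") (auto simp: inner_diff_right)
  qed
qed

lemma bregman_phi:
  fixes \<Theta> :: "'a::real_inner \<Rightarrow> ereal"
  assumes proper: "proper_fun \<Theta>" and wlsc: "weakly_lsc \<Theta>"
    and g: "is_gradient (conjugate \<Theta>) \<xi> x" and th: "\<Theta> xhat = ereal th"
  shows "real_of_ereal (bregman \<Theta> \<xi> xhat x) = th + real_of_ereal (conjugate \<Theta> \<xi>) - inner \<xi> xhat"
    and "bregman \<Theta> \<xi> xhat x = ereal (th + real_of_ereal (conjugate \<Theta> \<xi>) - inner \<xi> xhat)"
proof -
  have e: "\<Theta> x = ereal (inner \<xi> x - real_of_ereal (conjugate \<Theta> \<xi>))"
    by (rule grad_conj_subdiff(1)[OF proper wlsc g])
  show "bregman \<Theta> \<xi> xhat x = ereal (th + real_of_ereal (conjugate \<Theta> \<xi>) - inner \<xi> xhat)"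
    unfolding bregman_def e th by (simp add: inner_diff_right)
  then show "real_of_ereal (bregman \<Theta> \<xi> xhat x) = th + real_of_ereal (conjugate \<Theta> \<xi>) - inner \<xi> xhat"
    by simp
qed

lemma alg_bound:
  fixes r u e :: "'b::real_inner"
  assumes "norm u \<le> \<delta>" "norm e \<le> \<eta> * norm (r + u)" "0 \<le> \<eta>"
  shows "- inner (r + u + e) r \<le> - (1 - \<eta>) * (norm r)\<^sup>2 + \<delta> * (1 + \<eta>) * norm r"
proof -
  have a: "- inner u r \<le> \<delta> * norm r"
    using norm_cauchy_schwarz[of "-u" r] assms(1) by (simp add: mult_right_mono order_trans)
  have "norm (r + u) \<le> norm r + \<delta>" using norm_triangle_ineq[of r u] assms(1) by linarith
  then have "\<eta> * norm (r + u) \<le> \<eta> * (norm r + \<delta>)" using assms(3) by (rule mult_left_mono)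
  then have "norm e \<le> \<eta> * (norm r + \<delta>)" using assms(2) by linarith
  then have "norm e * norm r \<le> \<eta> * (norm r + \<delta>) * norm r" by (simp add: mult_right_mono)
  moreover have "- inner e r \<le> norm e * norm r"
    using norm_cauchy_schwarz[of "-e" r] by simp
  ultimately have b: "- inner e r \<le> \<eta> * (norm r + \<delta>) * norm r" by linarith
  have "- inner (r + u + e) r = - (norm r)\<^sup>2 - inner u r - inner e r"
    by (simp add: inner_add_left power2_norm_eq_inner)
  also have "\<dots> \<le> - (norm r)\<^sup>2 + \<delta> * norm r + \<eta> * (norm r + \<delta>) * norm r" using a b by linarith
  also have "\<dots> = - (1 - \<eta>) * (norm r)\<^sup>2 + \<delta> * (1 + \<eta>) * norm r"
    by (simp add: algebra_simps power2_eq_square)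
  finally show ?thesis .
qed

lemma phi_deriv:
  fixes \<Theta> :: "'a::{real_inner,complete_space} \<Rightarrow> ereal"
    and F :: "'a \<Rightarrow> 'b::{real_inner,complete_space}"
  assumes proper: "proper_fun \<Theta>" and wlsc: "weakly_lsc \<Theta>"
    and fl: "flow_solution \<Theta> DF F L yd \<xi>0 x0 \<xi> x"
    and T: "T > 0" and th: "\<Theta> xhat = ereal th"
  shows "((\<lambda>t. real_of_ereal (bregman \<Theta> (\<xi> t) xhat (x t))) has_real_derivative
           (- inner (blinfun_apply (L (x T)) (x T - xhat)) (F (x T) - yd))) (at T)"
proof -
  let ?cj = "\<lambda>\<zeta>. real_of_ereal (conjugate \<Theta> \<zeta>)"
  define \<xi>' where "\<xi>' = - adjoint (blinfun_apply (L (x T))) (F (x T) - yd)"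
  have grad: "\<And>t. t \<ge> 0 \<Longrightarrow> is_gradient (conjugate \<Theta>) (\<xi> t) (x t)"
    and dv: "\<And>t. t \<ge> 0 \<Longrightarrow> (\<xi> has_vector_derivative (- adjoint (blinfun_apply (L (x t))) (F (x t) - yd))) (at t within {0..})"
    using fl by (auto simp: flow_solution_def)
  have "(\<xi> has_vector_derivative \<xi>') (at T)"
    using dv[of T] T at_within_interior[of T "{0..}"] by (simp add: \<xi>'_def)
  then have d\<xi>: "(\<xi> has_derivative (\<lambda>h. h *\<^sub>R \<xi>')) (at T)" by (simp add: has_vector_derivative_def)
  have dcj: "(?cj has_derivative (\<lambda>v. inner (x T) v)) (at (\<xi> T))"
    using grad[of T] T by (simp add: is_gradient_def)
  have d1: "((\<lambda>t. ?cj (\<xi> t)) has_derivative (\<lambda>h. inner (x T) (h *\<^sub>R \<xi>'))) (at T)"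
    by (rule has_derivative_compose[OF d\<xi> dcj])
  have d2: "((\<lambda>t. inner (\<xi> t) xhat) has_derivative (\<lambda>h. inner (h *\<^sub>R \<xi>') xhat)) (at T)"
    by (rule bounded_linear.has_derivative[OF bounded_linear_inner_left d\<xi>])
  have d3: "((\<lambda>t. th + ?cj (\<xi> t) - inner (\<xi> t) xhat) has_derivative
      (\<lambda>h. 0 + inner (x T) (h *\<^sub>R \<xi>') - inner (h *\<^sub>R \<xi>') xhat)) (at T)"
    by (intro has_derivative_diff has_derivative_add has_derivative_const d1 d2)
  define D where "D = inner (x T - xhat) \<xi>'"
  have "(\<lambda>h. 0 + inner (x T) (h *\<^sub>R \<xi>') - inner (h *\<^sub>R \<xi>') xhat) = (*) D"
    by (rule ext) (simp add: D_def inner_diff_left inner_commute algebra_simps)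
  with d3 have d4: "((\<lambda>t. th + ?cj (\<xi> t) - inner (\<xi> t) xhat) has_real_derivative D) (at T)"
    by (simp add: has_field_derivative_def)
  have d5: "((\<lambda>t. real_of_ereal (bregman \<Theta> (\<xi> t) xhat (x t))) has_real_derivative D) (at T)"
  proof (rule has_field_derivative_transform_within_open[OF d4, of "{0<..}"])
    show "open {0::real<..}" by simp
    show "T \<in> {0<..}" using T by simp
    fix t :: real assume "t \<in> {0<..}"
    then show "th + ?cj (\<xi> t) - inner (\<xi> t) xhat = real_of_ereal (bregman \<Theta> (\<xi> t) xhat (x t))"
      using bregman_phi(1)[OF proper wlsc grad th, of t] by simp
  qed
  have "D = - inner (blinfun_apply (L (x T)) (x T - xhat)) (F (x T) - yd)"
    by (simp add: D_def \<xi>'_def adjoint_blinfun)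
  with d5 show ?thesis by simp
qed

lemma hold:
  fixes \<Theta> :: "'a::real_inner \<Rightarrow> ereal"
  assumes proper: "proper_fun \<Theta>" and pc: "p_convex \<Theta> p c0" and p: "p > 1" and c0: "c0 > 0"
    and s: "\<xi>s \<in> subdiff \<Theta> xs" and t: "\<xi>t \<in> subdiff \<Theta> xt"
  shows "norm (xt - xs) \<le> (norm (\<xi>t - \<xi>s) / (2 * c0)) powr (1 / (p - 1))"
proof -
  have notm: "\<Theta> z \<noteq> -\<infinity>" for z using proper by (simp add: proper_fun_def)
  obtain a where a: "\<Theta> xs = ereal a"
    using s notm[of xs] by (cases "\<Theta> xs") (auto simp: subdiff_def)
  obtain b where b: "\<Theta> xt = ereal b"
    using t notm[of xt] by (cases "\<Theta> xt") (auto simp: subdiff_def)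
  have es: "xs \<in> effdom \<Theta>" and et: "xt \<in> effdom \<Theta>" using a b by (auto simp: effdom_def)
  define d where "d = norm (xt - xs)"
  define D where "D = norm (\<xi>t - \<xi>s)"
  have "ereal (c0 * norm (xs - xt) powr p) \<le> bregman \<Theta> \<xi>s xt xs"
    using pc et s by (simp add: p_convex_def)
  then have 1: "c0 * d powr p \<le> b - a - inner \<xi>s (xt - xs)"
    by (simp add: bregman_def a b d_def norm_minus_commute)
  have "ereal (c0 * norm (xt - xs) powr p) \<le> bregman \<Theta> \<xi>t xs xt"
    using pc es t by (simp add: p_convex_def)
  then have 2: "c0 * d powr p \<le> a - b - inner \<xi>t (xs - xt)"
    by (simp add: bregman_def a b d_def)
  have "2 * c0 * d powr p \<le> inner (\<xi>t - \<xi>s) (xt - xs)"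
    using 1 2 by (simp add: inner_diff_left inner_diff_right algebra_simps)
  also have "\<dots> \<le> D * d" unfolding D_def d_def by (rule norm_cauchy_schwarz)
  finally have 3: "2 * c0 * d powr p \<le> D * d" .
  show ?thesis
  proof (cases "d = 0")
    case True then show ?thesis by (simp add: d_def[symmetric])
  next
    case False
    then have dp: "d > 0" by (simp add: d_def)
    have "d powr (p - 1) * d = d powr (p - 1) * d powr 1" using dp by simp
    also have "\<dots> = d powr (p - 1 + 1)" by (rule powr_add[symmetric])
    also have "\<dots> = d powr p" by simp
    finally have "d powr p = d powr (p - 1) * d" by simp
    then have "(2 * c0 * d powr (p - 1)) * d \<le> D * d" using 3 by (simp add: algebra_simps)
    then have "2 * c0 * d powr (p - 1) \<le> D" using dp by simp
    then have 4: "d powr (p - 1) \<le> D / (2 * c0)" using c0 by (simp add: field_simps)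
    have "d = (d powr (p - 1)) powr (1 / (p - 1))" using dp p by (simp add: powr_powr)
    also have "\<dots> \<le> (D / (2 * c0)) powr (1 / (p - 1))"
      using 4 p by (intro powr_mono2) auto
    finally show ?thesis by (simp add: d_def D_def)
  qed
qed

lemma vd_lip:
  fixes f :: "real \<Rightarrow> 'b::real_normed_vector"
  assumes "convex S" and d: "\<And>t. t \<in> S \<Longrightarrow> (f has_vector_derivative f' t) (at t within S)"
    and B: "\<And>t. t \<in> S \<Longrightarrow> norm (f' t) \<le> B" and "a \<in> S" "b \<in> S"
  shows "norm (f a - f b) \<le> B * \<bar>a - b\<bar>"
proof -
  have "norm (f a - f b) \<le> B * norm (a - b)"
  proof (rule differentiable_bound[OF assms(1) _ _ assms(4,5)])
    show "\<And>t. t \<in> S \<Longrightarrow> (f has_derivative (\<lambda>h. h *\<^sub>R f' t)) (at t within S)"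
      using d by (simp add: has_vector_derivative_def)
    fix t assume "t \<in> S"
    have "onorm (\<lambda>h::real. h *\<^sub>R f' t) = norm (f' t)"
      using onorm_scaleR_left[OF bounded_linear_ident, of "f' t"] onorm_id[where 'a=real] by simp
    then show "onorm (\<lambda>h::real. h *\<^sub>R f' t) \<le> B" using B[OF \<open>t \<in> S\<close>] by simp
  qed
  then show ?thesis by simp
qed

lemma deriv_bound:
  fixes \<Theta> :: "'a::{real_inner,complete_space} \<Rightarrow> ereal"
    and F :: "'a \<Rightarrow> 'b::{real_inner,complete_space}"
  assumes proper: "proper_fun \<Theta>" and wlsc: "weakly_lsc \<Theta>"
    and fl: "flow_solution \<Theta> DF F L yd \<xi>0 x0 \<xi> x"
    and T: "T > 0" and th: "\<Theta> xhat = ereal th" and Fh: "F xhat = y"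
    and nd: "norm (y - yd) \<le> \<delta>" and eta0: "0 \<le> \<eta>"
    and tc: "norm (F xhat - F (x T) - blinfun_apply (L (x T)) (xhat - x T)) \<le> \<eta> * norm (F xhat - F (x T))"
  shows "\<exists>D. ((\<lambda>t. real_of_ereal (bregman \<Theta> (\<xi> t) xhat (x t))) has_real_derivative D) (at T) \<and>
             D \<le> - (1 - \<eta>) * (norm (F (x T) - yd))\<^sup>2 + \<delta> * (1 + \<eta>) * norm (F (x T) - yd)"
proof (intro exI conjI)
  show "((\<lambda>t. real_of_ereal (bregman \<Theta> (\<xi> t) xhat (x t))) has_real_derivative
           (- inner (blinfun_apply (L (x T)) (x T - xhat)) (F (x T) - yd))) (at T)"
    by (rule phi_deriv[OF proper wlsc fl T th])
  define r where "r = F (x T) - yd"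
  define u where "u = yd - y"
  define e where "e = F xhat - F (x T) - blinfun_apply (L (x T)) (xhat - x T)"
  have eq: "r + u + e = blinfun_apply (L (x T)) (x T - xhat)"
  proof -
    have "blinfun_apply (L (x T)) (xhat - x T) = - blinfun_apply (L (x T)) (x T - xhat)"
      by (metis blinfun.minus_right minus_diff_eq)
    then show ?thesis by (simp add: r_def u_def e_def Fh)
  qed
  have ru: "norm (F xhat - F (x T)) = norm (r + u)"
    by (simp add: r_def u_def Fh norm_minus_commute)
  have "- inner (r + u + e) r \<le> - (1 - \<eta>) * (norm r)\<^sup>2 + \<delta> * (1 + \<eta>) * norm r"
    by (rule alg_bound) (use nd tc eta0 ru in \<open>auto simp: u_def e_def norm_minus_commute\<close>)
  then show "- inner (blinfun_apply (L (x T)) (x T - xhat)) (F (x T) - yd)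
      \<le> - (1 - \<eta>) * (norm (F (x T) - yd))\<^sup>2 + \<delta> * (1 + \<eta>) * norm (F (x T) - yd)"
    by (simp add: eq[symmetric] r_def)
qed

lemma part2:
  fixes \<Theta> :: "'a::{real_inner,complete_space} \<Rightarrow> ereal"
    and F :: "'a \<Rightarrow> 'b::{real_inner,complete_space}"
    and L :: "'a \<Rightarrow> ('a \<Rightarrow>\<^sub>L 'b)"
  assumes proper: "proper_fun \<Theta>" and wlsc: "weakly_lsc \<Theta>"
    and pconv: "p_convex \<Theta> p c0" and p: "p > 1" and c0: "c0 > 0" and rho: "\<rho> > 0"
    and ball_DF: "cball x0 (2 * \<rho>) \<subseteq> DF"
    and F_cont: "continuous_on DF F"
    and eta: "0 \<le> \<eta>" "\<eta> < 1"
    and tcc: "\<And>x xb. x \<in> cball x0 (2 * \<rho>) \<inter> effdom \<Theta> \<Longrightarrow> xb \<in> cball x0 (2 * \<rho>) \<inter> effdom \<Theta> \<Longrightarrow>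
                norm (F x - F xb - blinfun_apply (L xb) (x - xb)) \<le> \<eta> * norm (F x - F xb)"
    and C0: "C0 > 0" "\<And>x. x \<in> cball x0 (2 * \<rho>) \<Longrightarrow> norm (L x) \<le> C0"
    and fl: "flow_solution \<Theta> DF F L y \<xi>0 x0 \<xi> x"
    and th: "\<Theta> xhat = ereal th" and Fh: "F xhat = y" and hb: "norm (xhat - x0) \<le> \<rho>"
    and m: "bregman \<Theta> \<xi>0 xhat x0 = ereal m" and mle: "m \<le> c0 * \<rho> powr p"
  shows "(\<integral>\<^sup>+ \<tau>\<in>{0..}. ennreal ((norm (F (x \<tau>) - y))\<^sup>2) \<partial>lborel) \<le> ennreal (m / (1 - \<eta>))"
    and "((\<lambda>T. norm (F (x T) - y)) \<longlongrightarrow> 0) at_top"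
proof -
  define K where "K = cball x0 (2 * \<rho>)"
  let ?cj = "\<lambda>\<zeta>. real_of_ereal (conjugate \<Theta> \<zeta>)"
  have x00: "x 0 = x0" and xi00: "\<xi> 0 = \<xi>0"
    and xDF: "\<And>t. t \<ge> 0 \<Longrightarrow> x t \<in> DF"
    and grad: "\<And>t. t \<ge> 0 \<Longrightarrow> is_gradient (conjugate \<Theta>) (\<xi> t) (x t)"
    and dv: "\<And>t. t \<ge> 0 \<Longrightarrow> (\<xi> has_vector_derivative (- adjoint (blinfun_apply (L (x t))) (F (x t) - y))) (at t within {0..})"
    using fl by (auto simp: flow_solution_def)
  have sub: "\<And>t. t \<ge> 0 \<Longrightarrow> \<xi> t \<in> subdiff \<Theta> (x t)"
    using grad_conj_subdiff(2)[OF proper wlsc grad] .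
  have eff: "\<And>t. t \<ge> 0 \<Longrightarrow> x t \<in> effdom \<Theta>"
    using grad_conj_subdiff(1)[OF proper wlsc grad] by (simp add: effdom_def)
  have hateff: "xhat \<in> effdom \<Theta>" using th by (simp add: effdom_def)
  have hatK: "xhat \<in> K" using hb rho by (simp add: K_def dist_norm norm_minus_commute)
  have x0K: "x0 \<in> K" using rho by (simp add: K_def)
  define \<phi> where "\<phi> t = real_of_ereal (bregman \<Theta> (\<xi> t) xhat (x t))" for t
  have \<phi>eq: "\<And>t. t \<ge> 0 \<Longrightarrow> \<phi> t = th + ?cj (\<xi> t) - inner (\<xi> t) xhat"
    unfolding \<phi>_def using bregman_phi(1)[OF proper wlsc grad th] .
  have \<phi>breg: "\<And>t. t \<ge> 0 \<Longrightarrow> bregman \<Theta> (\<xi> t) xhat (x t) = ereal (\<phi> t)"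
    using bregman_phi(2)[OF proper wlsc grad th] \<phi>eq by simp
  have \<phi>0: "\<phi> 0 = m" using m by (simp add: \<phi>_def x00 xi00)
  have \<phi>low: "c0 * norm (x t - xhat) powr p \<le> \<phi> t" if "t \<ge> 0" for t
  proof -
    have "ereal (c0 * norm (x t - xhat) powr p) \<le> bregman \<Theta> (\<xi> t) xhat (x t)"
      using pconv hateff sub[OF that] by (simp add: p_convex_def)
    then show ?thesis using \<phi>breg[OF that] by simp
  qed
  have \<phi>nn: "\<And>t. t \<ge> 0 \<Longrightarrow> 0 \<le> \<phi> t"
    using \<phi>low c0 by (meson order.trans mult_nonneg_nonneg less_imp_le powr_ge_zero)
  have \<xi>cont: "continuous_on {0..} \<xi>"
    unfolding continuous_on_eq_continuous_within
    using dv by (auto intro: has_vector_derivative_continuous)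
  have \<phi>cont: "continuous_on {0..} \<phi>"
  proof -
    have "continuous_on {0..} (\<lambda>t. th + ?cj (\<xi> t) - inner (\<xi> t) xhat)"
      unfolding continuous_on_eq_continuous_within
    proof
      fix t :: real assume t: "t \<in> {0..}"
      have "isCont ?cj (\<xi> t)" using grad[of t] t
        by (auto simp: is_gradient_def intro: has_derivative_continuous)
      moreover have "continuous (at t within {0..}) \<xi>"
        using \<xi>cont t by (simp add: continuous_on_eq_continuous_within)
      ultimately have "continuous (at t within {0..}) (\<lambda>t. ?cj (\<xi> t))"
        by (rule continuous_within_compose3)
      then show "continuous (at t within {0..}) (\<lambda>t. th + ?cj (\<xi> t) - inner (\<xi> t) xhat)"
        using \<open>continuous (at t within {0..}) \<xi>\<close> by (intro continuous_intros)
    qed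
    then show ?thesis by (rule continuous_on_cong[THEN iffD1, rotated 2]) (auto simp: \<phi>eq)
  qed
  have xcont: "continuous_on {0..} x"
    unfolding continuous_on_eq_continuous_within
  proof
    fix t :: real assume t: "t \<in> {0..}"
    define f where "f s = (norm (\<xi> s - \<xi> t) / (2 * c0)) powr (1 / (p - 1))" for s
    have b: "norm (x s - x t) \<le> f s" if "s \<in> {0..}" for s
      unfolding f_def using hold[OF proper pconv p c0 sub sub, of t s] t that by simp
    have "((\<lambda>s. \<xi> s - \<xi> t) \<longlongrightarrow> 0) (at t within {0..})"
      using \<xi>cont t by (intro LIM_zero) (simp add: continuous_on_eq_continuous_within continuous_within)
    then have "((\<lambda>s. norm (\<xi> s - \<xi> t) / (2 * c0)) \<longlongrightarrow> 0) (at t within {0..})"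
      by (intro tendsto_divide_zero tendsto_norm_zero)
    then have fl0: "(f \<longlongrightarrow> 0) (at t within {0..})"
      unfolding f_def by (rule tendsto_zero_powrI[OF _ tendsto_const]) (use p c0 in auto)
    have "((\<lambda>s. x s - x t) \<longlongrightarrow> 0) (at t within {0..})"
    proof (rule tendsto_0_le[OF fl0, of _ 1])
      show "\<forall>\<^sub>F s in at t within {0..}. norm (x s - x t) \<le> norm (f s) * 1"
        unfolding eventually_at_filter
        by (rule always_eventually) (auto intro: order.trans[OF b] simp: f_def)
    qed
    then show "continuous (at t within {0..}) x"
      unfolding continuous_within by (rule LIM_zero_cancel)
  qed
  define G where "G t = (norm (F (x t) - y))\<^sup>2" for t
  have Gnn: "\<And>t. 0 \<le> G t" by (simp add: G_def)
  have Fxcont: "continuous_on {0..} (\<lambda>t. F (x t))"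
    by (rule continuous_on_compose2[OF F_cont xcont]) (auto intro: xDF)
  have Gcont: "continuous_on {0..} G"
    unfolding G_def by (intro continuous_intros Fxcont)
  have tcK: "norm (F xhat - F (x t) - blinfun_apply (L (x t)) (xhat - x t)) \<le> \<eta> * norm (F xhat - F (x t))"
    if "t \<ge> 0" "x t \<in> K" for t
    using tcc[of xhat "x t"] hatK hateff that eff[OF that(1)] by (simp add: K_def)
  have derivK: "\<exists>D. (\<phi> has_real_derivative D) (at t) \<and> D \<le> - (1 - \<eta>) * G t"
    if "t > 0" "x t \<in> K" for t
    using deriv_bound[OF proper wlsc fl that(1) th Fh _ eta(1) tcK[of t], of 0] that
    unfolding \<phi>_def[symmetric] G_def by simp
  have psi: "(1 - \<eta>) * integral {0..T} G \<le> m - \<phi> T"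
    if T: "T \<ge> 0" and TK: "\<And>t. t \<in> {0..T} \<Longrightarrow> x t \<in> K" for T
  proof -
    define \<psi> where "\<psi> t = \<phi> t + (1 - \<eta>) * integral {0..t} G" for t
    have Gc: "continuous_on {0..T} G" using Gcont by (rule continuous_on_subset) auto
    have "continuous_on {0..T} \<psi>"
      unfolding \<psi>_def
      by (intro continuous_intros continuous_on_subset[OF \<phi>cont]
            indefinite_integral_continuous_1 integrable_continuous_real Gc) auto
    moreover have "\<exists>D. (\<psi> has_real_derivative D) (at t) \<and> D \<le> 0" if t: "0 < t" "t < T" for t
    proof -
      obtain D where D: "(\<phi> has_real_derivative D) (at t)" "D \<le> - (1 - \<eta>) * G t"
        using derivK[of t] t TK[of t] by auto
      have "((\<lambda>u. integral {0..u} G) has_real_derivative G t) (at t within {0..T})"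
        using t by (intro integral_has_real_derivative Gc) auto
      then have I: "((\<lambda>u. integral {0..u} G) has_real_derivative G t) (at t)"
        using t at_within_interior[of t "{0..T}"] by simp
      have "(\<psi> has_real_derivative D + (1 - \<eta>) * G t) (at t)"
        unfolding \<psi>_def by (intro derivative_intros D(1) DERIV_cmult I)
      moreover have "D + (1 - \<eta>) * G t \<le> 0" using D(2) by (simp add: algebra_simps)
      ultimately show ?thesis by blast
    qed
    ultimately have "\<psi> T \<le> \<psi> 0"
      by (intro DERIV_nonpos_imp_decreasing_open[OF T]) auto
    then show ?thesis by (simp add: \<psi>_def \<phi>0)
  qed
  have adj0: "adjoint (blinfun_apply A) 0 = 0" for A :: "'a \<Rightarrow>\<^sub>L 'b"
  proof -
    have "inner (adjoint (blinfun_apply A) 0) (adjoint (blinfun_apply A) 0) = 0"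
      using adjoint_blinfun[of A "adjoint (blinfun_apply A) 0" 0] by simp
    then show ?thesis by simp
  qed
  have Gint: "G integrable_on {a..b}" if "0 \<le> a" for a b
    by (rule integrable_continuous_real, rule continuous_on_subset[OF Gcont]) (use that in auto)
  have allK: "x t \<in> K" if t0: "t \<ge> 0" for t
  proof (rule ccontr)
    assume nt: "x t \<notin> K"
    define B where "B = {u. 0 \<le> u \<and> x u \<notin> K}"
    define s where "s = Inf B"
    have tB: "t \<in> B" using nt t0 by (simp add: B_def)
    have bdd: "bdd_below B" by (rule bdd_belowI[of _ 0]) (auto simp: B_def)
    have s0: "0 \<le> s" unfolding s_def using tB by (intro cInf_greatest) (auto simp: B_def)
    have sle: "\<And>u. u \<in> B \<Longrightarrow> s \<le> u" unfolding s_def using bdd by (simp add: cInf_lower)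
    have before: "x u \<in> K" if "0 \<le> u" "u < s" for u
      using sle[of u] that by (force simp: B_def)
    have clC: "closed ({0..} \<inter> x -` K)"
      by (rule continuous_closed_preimage[OF xcont]) (auto simp: K_def)
    have xsK: "x s \<in> K"
    proof (cases "s = 0")
      case True then show ?thesis using x00 x0K by simp
    next
      case False
      then have sp: "0 < s" using s0 by simp
      have "{0..<s} \<subseteq> {0..} \<inter> x -` K" using before by auto
      then have "closure {0..<s} \<subseteq> {0..} \<inter> x -` K" using clC by (rule closure_minimal)
      then have "{0..s} \<subseteq> x -` K" using sp by auto
      moreover have "s \<in> {0..s}" using sp by simp
      ultimately show ?thesis by blast
    qed
    have upto: "\<And>u. u \<in> {0..s} \<Longrightarrow> x u \<in> K"
      using before xsK by (metis atLeastAtMost_iff order_le_less)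
    have ps: "(1 - \<eta>) * integral {0..s} G \<le> m - \<phi> s" by (rule psi[OF s0 upto])
    have Inn: "0 \<le> integral {0..s} G" by (rule integral_nonneg[OF Gint]) (auto simp: Gnn)
    have xsb: "x s \<in> ball x0 (2 * \<rho>)"
    proof (cases "integral {0..s} G > 0")
      case True
      then have "0 < (1 - \<eta>) * integral {0..s} G" using eta by simp
      then have "\<phi> s < m" using ps by linarith
      then have lt: "c0 * norm (x s - xhat) powr p < c0 * \<rho> powr p" using \<phi>low[OF s0] mle by linarith
      have "norm (x s - xhat) < \<rho>"
      proof (rule ccontr)
        assume "\<not> norm (x s - xhat) < \<rho>"
        then have "\<rho> powr p \<le> norm (x s - xhat) powr p" using rho p by (intro powr_mono2) auto
        then show False using lt c0 by simp
      qed
      then have "dist x0 (x s) < 2 * \<rho>"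
        using hb norm_triangle_ineq[of "x s - xhat" "xhat - x0"] by (simp add: dist_norm norm_minus_commute)
      then show ?thesis by simp
    next
      case False
      then have I0: "integral {0..s} G = 0" using Inn by simp
      show ?thesis
      proof (cases "s = 0")
        case True then show ?thesis using x00 rho by simp
      next
        case False
        then have sp: "0 < s" using s0 by simp
      have G0: "G u = 0" if "u \<in> {0..s}" for u
      proof -
        have hi: "(G has_integral 0) (cbox 0 s)" using integrable_integral[OF Gint[of 0 s]] I0 by simp
        have gc: "continuous_on (cbox 0 s) G" using continuous_on_subset[OF Gcont] by auto
        show ?thesis
          by (rule has_integral_0_cbox_imp_0[OF gc _ hi]) (use that sp Gnn in auto)
      qed
      have d0: "(\<xi> has_vector_derivative 0) (at u within {0..s})" if "u \<in> {0..s}" for u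
      proof -
        have "F (x u) - y = 0" using G0[OF that] by (simp add: G_def)
        then have "(\<xi> has_vector_derivative 0) (at u within {0..})"
          using dv[of u] that adj0 by simp
        then show ?thesis by (rule has_vector_derivative_within_subset) auto
      qed
      have "norm (\<xi> s - \<xi> 0) \<le> 0 * \<bar>s - 0\<bar>"
        by (rule vd_lip[OF _ d0]) (use s0 in auto)
      then have "\<xi> s = \<xi> 0" by simp
      then have "norm (x s - x 0) \<le> 0"
        using hold[OF proper pconv p c0 sub sub, of 0 s] s0 by simp
      then have "x s = x0" using x00 by simp
      then show ?thesis using rho by simp
      qed
    qed
    have "((\<lambda>u. x u) \<longlongrightarrow> x s) (at s within {0..})"
      using xcont s0 by (simp add: continuous_on_eq_continuous_within continuous_within)
    then have "\<forall>\<^sub>F u in at s within {0..}. x u \<in> ball x0 (2 * \<rho>)"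
      using topological_tendstoD[OF _ open_ball xsb] by blast
    then obtain d where d: "d > 0" "\<And>u. u \<in> {0..} \<Longrightarrow> u \<noteq> s \<Longrightarrow> dist u s < d \<Longrightarrow> x u \<in> ball x0 (2 * \<rho>)"
      unfolding eventually_at by blast
    have "s + d \<le> u" if "u \<in> B" for u
    proof (rule ccontr)
      assume "\<not> s + d \<le> u"
      moreover have "s \<le> u" using sle that .
      moreover have "u \<noteq> s" using that xsK by (auto simp: B_def)
      ultimately have "x u \<in> ball x0 (2 * \<rho>)" using d(2)[of u] that by (auto simp: B_def dist_real_def)
      then show False using that by (auto simp: B_def K_def)
    qed
    then have "s + d \<le> Inf B" using tB by (intro cInf_greatest) auto
    then have "s + d \<le> s" by (simp add: s_def)
    then show False using d by simp
  qed
  have Jb: "integral {0..T} G \<le> m / (1 - \<eta>)" if "T \<ge> 0" for T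
  proof -
    have "(1 - \<eta>) * integral {0..T} G \<le> m" using psi[OF that allK] \<phi>nn[OF that] by auto
    then show ?thesis using eta by (simp add: pos_le_divide_eq mult.commute)
  qed
  show "(\<integral>\<^sup>+ \<tau>\<in>{0..}. ennreal ((norm (F (x \<tau>) - y))\<^sup>2) \<partial>lborel) \<le> ennreal (m / (1 - \<eta>))"
  proof -
    define f where "f n \<tau> = ennreal (indicator {0..real n} \<tau> *\<^sub>R G \<tau>)" for n \<tau>
    have f2: "f n \<tau> = ennreal (G \<tau>) * indicator {0..real n} \<tau>" for n \<tau>
      by (simp add: f_def split: split_indicator)
    have inc: "incseq f"
      unfolding incseq_def le_fun_def f2
      by (auto intro!: mult_left_mono simp: split: split_indicator)
    have meas: "f n \<in> borel_measurable lborel" for n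
    proof -
      have "(\<lambda>\<tau>. indicator {0..real n} \<tau> *\<^sub>R G \<tau>) \<in> borel_measurable borel"
        by (rule borel_measurable_continuous_on_indicator) (auto intro: continuous_on_subset[OF Gcont])
      then show ?thesis unfolding f_def by measurable
    qed
    have sup: "ennreal (G \<tau>) * indicator {0..} \<tau> = (SUP n. f n \<tau>)" for \<tau>
    proof (cases "\<tau> \<ge> 0")
      case True
      obtain n :: nat where n: "\<tau> \<le> real n" using real_arch_simple by blast
      have "f n \<tau> = ennreal (G \<tau>)" using True n by (simp add: f2)
      moreover have "f k \<tau> \<le> ennreal (G \<tau>)" for k by (simp add: f2 split: split_indicator)
      ultimately have "(SUP n. f n \<tau>) = ennreal (G \<tau>)"
        by (intro antisym SUP_least) (auto intro: SUP_upper2[of n])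
      then show ?thesis using True by simp
    next
      case False then show ?thesis by (simp add: f2)
    qed
    have int: "integral\<^sup>N lborel (f n) = ennreal (integral {0..real n} G)" for n
      unfolding f2
      by (rule nn_integral_has_integral_lebesgue'[OF _ integrable_integral[OF Gint]]) (auto simp: Gnn)
    have "(\<integral>\<^sup>+ \<tau>\<in>{0..}. ennreal ((norm (F (x \<tau>) - y))\<^sup>2) \<partial>lborel)
        = (\<integral>\<^sup>+ \<tau>. (SUP n. f n \<tau>) \<partial>lborel)"
      using sup by (simp add: G_def)
    also have "\<dots> = (SUP n. integral\<^sup>N lborel (f n))"
      by (rule nn_integral_monotone_convergence_SUP[OF inc meas])
    also have "\<dots> \<le> ennreal (m / (1 - \<eta>))"
      unfolding int by (intro SUP_least ennreal_leI Jb) simp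
    finally show ?thesis .
  qed
  show "((\<lambda>T. norm (F (x T) - y)) \<longlongrightarrow> 0) at_top"
  proof -
    have lipF: "(1 - \<eta>) * norm (F a - F b) \<le> C0 * norm (a - b)"
      if a: "a \<in> K \<inter> effdom \<Theta>" and b: "b \<in> K \<inter> effdom \<Theta>" for a b
    proof -
      have tc: "norm (F a - F b - blinfun_apply (L b) (a - b)) \<le> \<eta> * norm (F a - F b)"
        using tcc a b by (simp add: K_def)
      have "norm (F a - F b) \<le> norm (blinfun_apply (L b) (a - b)) + norm (F a - F b - blinfun_apply (L b) (a - b))"
        using norm_triangle_ineq[of "blinfun_apply (L b) (a - b)" "F a - F b - blinfun_apply (L b) (a - b)"] by simp
      also have "norm (blinfun_apply (L b) (a - b)) \<le> C0 * norm (a - b)"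
        using norm_blinfun[of "L b" "a - b"] C0(2)[of b] b
        by (simp add: K_def) (meson mult_right_mono norm_ge_zero order.trans)
      finally show ?thesis using tc by (simp add: algebra_simps)
    qed
    define M where "M = C0 * (3 * \<rho>) / (1 - \<eta>)"
    have inK: "\<And>t. t \<ge> 0 \<Longrightarrow> x t \<in> K \<inter> effdom \<Theta>" using allK eff by auto
    have Mb: "norm (F (x t) - y) \<le> M" if "t \<ge> 0" for t
    proof -
      have "(1 - \<eta>) * norm (F xhat - F (x t)) \<le> C0 * norm (xhat - x t)"
        using lipF[of xhat "x t"] inK[OF that] hatK hateff by simp
      also have "norm (xhat - x t) \<le> 3 * \<rho>"
      proof -
        have "norm (x t - x0) \<le> 2 * \<rho>" using allK[OF that] by (simp add: K_def dist_norm norm_minus_commute)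
        then show ?thesis using hb norm_triangle_ineq[of "xhat - x0" "x0 - x t"]
          by (simp add: norm_minus_commute)
      qed
      then have "C0 * norm (xhat - x t) \<le> C0 * (3 * \<rho>)" using C0 by simp
      finally show ?thesis using eta by (simp add: M_def pos_le_divide_eq Fh norm_minus_commute mult.commute)
    qed
    have M0: "0 \<le> M" using Mb[of 0] by (meson norm_ge_zero order.trans order_refl)
    have xiLip: "norm (\<xi> t - \<xi> s) \<le> (C0 * M) * \<bar>t - s\<bar>" if "t \<ge> 0" "s \<ge> 0" for t s
    proof (rule vd_lip[OF _ dv])
      fix u :: real assume u: "u \<in> {0..}"
      have "norm (- adjoint (blinfun_apply (L (x u))) (F (x u) - y)) \<le> norm (L (x u)) * norm (F (x u) - y)"
        using adjoint_norm_le by simp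
      also have "\<dots> \<le> C0 * M"
        using C0 allK[of u] Mb[of u] u by (auto simp: K_def intro!: mult_mono)
      finally show "norm (- adjoint (blinfun_apply (L (x u))) (F (x u) - y)) \<le> C0 * M" .
    qed (use that in auto)
    define q where "q = 1 / (p - 1)"
    have q: "q > 0" using p by (simp add: q_def)
    define \<omega> where "\<omega> h = 2 * M * (C0 / (1 - \<eta>)) * ((C0 * M) * h / (2 * c0)) powr q" for h
    have Gmod: "\<bar>G t - G s\<bar> \<le> \<omega> \<bar>t - s\<bar>" if "t \<ge> 0" "s \<ge> 0" for t s
    proof -
      have xh: "norm (x t - x s) \<le> ((C0 * M) * \<bar>t - s\<bar> / (2 * c0)) powr q"
      proof -
        have "norm (x t - x s) \<le> (norm (\<xi> t - \<xi> s) / (2 * c0)) powr q"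
          using hold[OF proper pconv p c0 sub sub, of s t] that by (simp add: q_def)
        also have "\<dots> \<le> ((C0 * M) * \<bar>t - s\<bar> / (2 * c0)) powr q"
          using xiLip[OF that] q c0 by (intro powr_mono2 divide_right_mono) auto
        finally show ?thesis .
      qed
      have "(1 - \<eta>) * norm (F (x t) - F (x s)) \<le> C0 * norm (x t - x s)"
        using lipF inK that by blast
      then have Fd: "norm (F (x t) - F (x s)) \<le> (C0 / (1 - \<eta>)) * norm (x t - x s)"
        using eta by (simp add: pos_le_divide_eq mult.commute)
      define a where "a = norm (F (x t) - y)"
      define b where "b = norm (F (x s) - y)"
      have ab: "\<bar>a - b\<bar> \<le> norm (F (x t) - F (x s))"
        unfolding a_def b_def using norm_triangle_ineq3[of "F (x t) - y" "F (x s) - y"] by simp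
      have "G t - G s = (a - b) * (a + b)"
        by (simp add: G_def a_def b_def power2_eq_square algebra_simps)
      moreover have "\<bar>a + b\<bar> = a + b" by (simp add: a_def b_def)
      ultimately have "\<bar>G t - G s\<bar> = \<bar>a - b\<bar> * (a + b)" by (simp add: abs_mult)
      also have "\<dots> \<le> norm (F (x t) - F (x s)) * (2 * M)"
        using ab Mb[of t] Mb[of s] that by (intro mult_mono) (auto simp: a_def b_def)
      also have "\<dots> \<le> ((C0 / (1 - \<eta>)) * ((C0 * M) * \<bar>t - s\<bar> / (2 * c0)) powr q) * (2 * M)"
        using Fd xh M0 C0 eta
        by (intro mult_right_mono order.trans[OF Fd] mult_left_mono) auto
      also have "\<dots> = \<omega> \<bar>t - s\<bar>" by (simp add: \<omega>_def algebra_simps)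
      finally show ?thesis .
    qed
    have \<omega>lim: "(\<omega> \<longlongrightarrow> 0) (at_right 0)"
    proof -
      have "((\<lambda>h. (C0 * M) * h / (2 * c0)) \<longlongrightarrow> (C0 * M) * 0 / (2 * c0)) (at_right 0)"
        using c0 by (intro tendsto_intros) auto
      then have "((\<lambda>h. ((C0 * M) * h / (2 * c0)) powr q) \<longlongrightarrow> 0) (at_right 0)"
        using q M0 C0 c0
        by (intro tendsto_zero_powrI[OF _ tendsto_const])
           (auto simp: eventually_at_right_field intro!: exI[of _ 1])
      then have "((\<lambda>h. 2 * M * (C0 / (1 - \<eta>)) * ((C0 * M) * h / (2 * c0)) powr q) \<longlongrightarrow> 2 * M * (C0 / (1 - \<eta>)) * 0) (at_right 0)"
        by (intro tendsto_intros)
      then show ?thesis unfolding \<omega>_def[abs_def] by simp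
    qed
    define J where "J T = integral {0..T} G" for T
    have Jadd: "J (a + h) = J a + integral {a..a + h} G" if "a \<ge> 0" "h \<ge> 0" for a h
      unfolding J_def using Henstock_Kurzweil_Integration.integral_combine[where a=0 and c=a and b="a + h" and f=G] Gint[of 0 "a + h"] that by simp
    have Jmono: "J a \<le> J b" if "0 \<le> a" "a \<le> b" for a b
    proof -
      have "0 \<le> integral {a..b} G" by (rule integral_nonneg[OF Gint]) (use that Gnn in auto)
      then show ?thesis using Jadd[of a "b - a"] that by simp
    qed
    have G0: "(G \<longlongrightarrow> 0) at_top"
    proof (rule tendstoI)
      fix eps :: real assume eps: "eps > 0"
      show "\<forall>\<^sub>F t in at_top. dist (G t) 0 < eps"
      proof (rule ccontr)
        assume "\<not> (\<forall>\<^sub>F t in at_top. dist (G t) 0 < eps)"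
        then have big: "\<forall>N. \<exists>t\<ge>N. G t \<ge> eps"
          unfolding eventually_at_top_linorder using Gnn by (auto simp: not_less)
        have "\<forall>\<^sub>F h in at_right 0. dist (\<omega> h) 0 < eps / 2"
          using \<omega>lim eps by (intro tendstoD) auto
        then obtain d where d: "d > 0" "\<And>h. 0 < h \<Longrightarrow> h < d \<Longrightarrow> \<omega> h < eps / 2"
          unfolding eventually_at_right_field dist_real_def by (metis abs_less_iff diff_zero)
        define \<delta> where "\<delta> = d / 2"
        have \<delta>: "0 < \<delta>" "\<delta> < d" using d by (auto simp: \<delta>_def)
        have bump: "\<delta> * (eps / 2) \<le> integral {t..t + \<delta>} G" if t: "t \<ge> 0" "G t \<ge> eps" for t
        proof -
          have "G u \<ge> eps / 2" if u: "u \<in> {t..t + \<delta>}" for u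
          proof (cases "u = t")
            case True then show ?thesis using t eps by simp
          next
            case False
            then have "0 < \<bar>u - t\<bar>" "\<bar>u - t\<bar> < d" using u \<delta> by auto
            then have "\<omega> \<bar>u - t\<bar> < eps / 2" by (rule d(2))
            moreover have "\<bar>G u - G t\<bar> \<le> \<omega> \<bar>u - t\<bar>" using Gmod[of u t] u t by simp
            ultimately show ?thesis using t by linarith
          qed
          then have "integral {t..t + \<delta>} (\<lambda>_. eps / 2) \<le> integral {t..t + \<delta>} G"
            by (intro integral_le Gint) (use t in auto)
          then show ?thesis using \<delta> by simp
        qed
        have grow: "\<exists>T\<ge>0. real k * (\<delta> * (eps / 2)) \<le> J T" for k :: nat
        proof (induction k)
          case 0 then show ?case by (intro exI[of _ 0]) (simp add: J_def)
        next
          case (Suc k)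
          then obtain T where T: "T \<ge> 0" "real k * (\<delta> * (eps / 2)) \<le> J T" by blast
          obtain t where t: "t \<ge> T" "G t \<ge> eps" using big by blast
          have "J T \<le> J t" using Jmono T t by simp
          moreover have "J (t + \<delta>) = J t + integral {t..t + \<delta>} G" using Jadd[of t \<delta>] T t \<delta> by simp
          moreover have "\<delta> * (eps / 2) \<le> integral {t..t + \<delta>} G" using bump[of t] T t by simp
          ultimately have "real (Suc k) * (\<delta> * (eps / 2)) \<le> J (t + \<delta>)" using T(2)
            by (simp add: algebra_simps)
          then show ?case using T t \<delta> by (intro exI[of _ "t + \<delta>"]) auto
        qed
        have pos: "0 < \<delta> * (eps / 2)" using \<delta> eps by simp
        obtain k :: nat where k: "(m / (1 - \<eta>)) / (\<delta> * (eps / 2)) < real k"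
          using reals_Archimedean2 by blast
        obtain T where T: "T \<ge> 0" "real k * (\<delta> * (eps / 2)) \<le> J T" using grow by blast
        have "m / (1 - \<eta>) < real k * (\<delta> * (eps / 2))" using k pos_divide_less_eq[OF pos] by blast
        moreover have "J T \<le> m / (1 - \<eta>)" using Jb[OF T(1)] by (simp add: J_def)
        ultimately show False using T(2) by linarith
      qed
    qed
    have "((\<lambda>T. sqrt (G T)) \<longlongrightarrow> sqrt 0) at_top" by (intro tendsto_intros G0)
    then show ?thesis by (simp add: G_def)
  qed
qed

theorem proposition3p2:
  fixes \<Theta> :: "'a::{real_inner,complete_space} \<Rightarrow> ereal"
    and F :: "'a \<Rightarrow> 'b::{real_inner,complete_space}"
    and DF :: "'a set"
    and L :: "'a \<Rightarrow> ('a \<Rightarrow>\<^sub>L 'b)"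
    and y :: 'b
    and p c0 \<rho> \<eta> C0 :: real
    and x0 \<xi>0 xstar xhat :: 'a
  assumes p: "p > 1" and c0: "c0 > 0"
    and Theta_proper: "proper_fun \<Theta>"
    and Theta_wlsc: "weakly_lsc \<Theta>"
    and Theta_pconv: "p_convex \<Theta> p c0"
    and rho: "\<rho> > 0"
    and xi0: "\<xi>0 \<in> subdiff \<Theta> x0"
    and ball_DF: "cball x0 (2 * \<rho>) \<subseteq> DF"
    and xstar: "xstar \<in> DF" "F xstar = y" "xstar \<in> effdom \<Theta>"
               "bregman \<Theta> \<xi>0 xstar x0 \<le> ereal (c0 * \<rho> powr p)"
    and F_cont: "continuous_on DF F"
    and F_wclosed: "weakly_closed_on DF F"
    and L_cont: "continuous_on (cball x0 (2 * \<rho>) \<inter> effdom \<Theta>) L"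
    and eta: "0 \<le> \<eta>" "\<eta> < 1"
    and tcc: "\<And>x xb. x \<in> cball x0 (2 * \<rho>) \<inter> effdom \<Theta> \<Longrightarrow> xb \<in> cball x0 (2 * \<rho>) \<inter> effdom \<Theta> \<Longrightarrow>
                norm (F x - F xb - blinfun_apply (L xb) (x - xb)) \<le> \<eta> * norm (F x - F xb)"
    and C0: "C0 > 0" "\<And>x. x \<in> cball x0 (2 * \<rho>) \<Longrightarrow> norm (L x) \<le> C0"
    and xhat: "xhat \<in> DF" "F xhat = y"
              "bregman \<Theta> \<xi>0 xhat x0 \<le> ereal (c0 * \<rho> powr p)"
  shows
    "(\<forall>yd \<delta> \<xi>d xd T.
        norm (y - yd) \<le> \<delta> \<longrightarrow> flow_solution \<Theta> DF F L yd \<xi>0 x0 \<xi>d xd \<longrightarrow> T > 0 \<longrightarrow>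
        xd T \<in> cball x0 (2 * \<rho>) \<longrightarrow>
        (\<exists>D. ((\<lambda>t. real_of_ereal (bregman \<Theta> (\<xi>d t) xhat (xd t))) has_real_derivative D) (at T) \<and>
             D \<le> - (1 - \<eta>) * (norm (F (xd T) - yd))\<^sup>2 + \<delta> * (1 + \<eta>) * norm (F (xd T) - yd)))
     \<and>
     (\<forall>\<xi> x. flow_solution \<Theta> DF F L y \<xi>0 x0 \<xi> x \<longrightarrow>
        (\<integral>\<^sup>+ \<tau>\<in>{0..}. ennreal ((norm (F (x \<tau>) - y))\<^sup>2) \<partial>lborel)
           \<le> ennreal (real_of_ereal (bregman \<Theta> \<xi>0 xhat x0) / (1 - \<eta>))
        \<and> ((\<lambda>T. norm (F (x T) - y)) \<longlongrightarrow> 0) at_top)"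
proof -
  have notm: "\<Theta> z \<noteq> -\<infinity>" for z using Theta_proper by (simp add: proper_fun_def)
  obtain a0 where a0: "\<Theta> x0 = ereal a0"
    using xi0 notm[of x0] by (cases "\<Theta> x0") (auto simp: subdiff_def)
  obtain th where th: "\<Theta> xhat = ereal th"
  proof (cases "\<Theta> xhat")
    case PInf
    then have "bregman \<Theta> \<xi>0 xhat x0 = \<infinity>" by (simp add: bregman_def a0)
    then show ?thesis using xhat(3) by simp
  qed (use notm[of xhat] in auto)
  define m where "m = th - a0 - inner \<xi>0 (xhat - x0)"
  have m: "bregman \<Theta> \<xi>0 xhat x0 = ereal m" by (simp add: bregman_def a0 th m_def)
  have mle: "m \<le> c0 * \<rho> powr p" using xhat(3) m by simp
  have hateff: "xhat \<in> effdom \<Theta>" using th by (simp add: effdom_def)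
  have hb: "norm (xhat - x0) \<le> \<rho>"
  proof (rule ccontr)
    assume "\<not> norm (xhat - x0) \<le> \<rho>"
    then have "\<rho> powr p < norm (xhat - x0) powr p" using rho p by (intro powr_less_mono2) auto
    moreover have "ereal (c0 * norm (x0 - xhat) powr p) \<le> bregman \<Theta> \<xi>0 xhat x0"
      using Theta_pconv hateff xi0 by (simp add: p_convex_def)
    ultimately have "c0 * \<rho> powr p < c0 * norm (x0 - xhat) powr p" "c0 * norm (x0 - xhat) powr p \<le> m"
      using m c0 by (simp_all add: norm_minus_commute)
    then show False using mle by linarith
  qed
  have hatK: "xhat \<in> cball x0 (2 * \<rho>)" using hb rho by (simp add: dist_norm norm_minus_commute)
  show ?thesis
  proof (intro conjI allI impI)
    fix yd \<delta> \<xi>d xd T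
    assume nd: "norm (y - yd) \<le> \<delta>" and fl: "flow_solution \<Theta> DF F L yd \<xi>0 x0 \<xi>d xd"
      and T: "T > 0" and xT: "xd T \<in> cball x0 (2 * \<rho>)"
    have "is_gradient (conjugate \<Theta>) (\<xi>d T) (xd T)" using fl T by (simp add: flow_solution_def)
    then have "xd T \<in> effdom \<Theta>"
      using grad_conj_subdiff(1)[OF Theta_proper Theta_wlsc] by (simp add: effdom_def)
    then have tc: "norm (F xhat - F (xd T) - blinfun_apply (L (xd T)) (xhat - xd T)) \<le> \<eta> * norm (F xhat - F (xd T))"
      using tcc[of xhat "xd T"] hatK hateff xT by simp
    show "\<exists>D. ((\<lambda>t. real_of_ereal (bregman \<Theta> (\<xi>d t) xhat (xd t))) has_real_derivative D) (at T) \<and>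
             D \<le> - (1 - \<eta>) * (norm (F (xd T) - yd))\<^sup>2 + \<delta> * (1 + \<eta>) * norm (F (xd T) - yd)"
      by (rule deriv_bound[OF Theta_proper Theta_wlsc fl T th xhat(2) nd eta(1) tc])
  next
    fix \<xi> x assume fl: "flow_solution \<Theta> DF F L y \<xi>0 x0 \<xi> x"
    note P = part2[OF Theta_proper Theta_wlsc Theta_pconv p c0 rho ball_DF F_cont eta tcc C0 fl th xhat(2) hb m mle]
    show "(\<integral>\<^sup>+ \<tau>\<in>{0..}. ennreal ((norm (F (x \<tau>) - y))\<^sup>2) \<partial>lborel)
           \<le> ennreal (real_of_ereal (bregman \<Theta> \<xi>0 xhat x0) / (1 - \<eta>))"
      using P(1) m by simp
    show "((\<lambda>T. norm (F (x T) - y)) \<longlongrightarrow> 0) at_top" by (rule P(2))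
  qed
qed

end
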